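(* Let $\mathbf{S}$ be a symmetric positive definite $p\times p$ matrix, $\mathbf{S}\ne\mathbf{I}$, with eigenvalues $\omega_1\ge\cdots\ge\omega_p>0$, and let $f(\mathbf{\Theta})=-\ln\det\mathbf{\Theta}+\operatorname{tr}(\mathbf{S}\mathbf{\Theta})$ on symmetric positive definite matrices. For each $i$, let $r_i=\sum_{l=1}^p\omega_l-\sum_{j\ne i}(\ln\omega_{p-j+1}+1)$. Then $r_i>\ln\omega_{p-i+1}+1$, so the equation $-\ln\lambda+\lambda\omega_{p-i+1}=r_i$ has exactly two positive roots $\lambda_{i\min}<\lambda_{i\max}$. If $\mathbf{\Theta}$ is symmetric positive definite with eigenvalues $\lambda_1\ge\cdots\ge\lambda_p$ and $\lambda_i\notin[\lambda_{i\min},\lambda_{i\max}]$ for some $i$, then $f(\mathbf{\Theta})>f(\mathbf{I})=\operatorname{tr}(\mathbf{S})$. Consequently, if $\mathcal{C}$ is any set of symmetric positive definite matrices containing $\mathbf{I}$ and $\mathbf{\Theta}$ minimizes $f$ over $\mathcal{C}$, then $\lambda_i\in[\lambda_{i\min},\lambda_{i\max}]$ for all $i$ and $$\|\nabla f(\mathbf{\Theta})\|_F=\|\mathbf{S}-\mathbf{\Theta}^{-1}\|_F\le\sqrt{\sum_{i=1}^p\lambda_{i\min}^{-2}}+\|\mathbf{S}\|_F.$$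
   Context: $\|\cdot\|_F$ is the Frobenius norm. *)

theory Defs
  imports "Jordan_Normal_Form.Gauss_Jordan_Elimination" "Jordan_Normal_Form.Char_Poly"
begin

definition mtrace :: "real mat \<Rightarrow> real" where
  "mtrace A = (\<Sum>i<dim_row A. A $$ (i, i))"

definition frob_norm :: "real mat \<Rightarrow> real" where
  "frob_norm A = sqrt (\<Sum>i<dim_row A. \<Sum>j<dim_col A. (A $$ (i, j))\<^sup>2)"

definition minv :: "real mat \<Rightarrow> real mat" where
  "minv A = the (mat_inverse A)"

definition spd :: "nat \<Rightarrow> real mat \<Rightarrow> bool" where
  "spd p A \<longleftrightarrow> A \<in> carrier_mat p p \<and> transpose_mat A = A \<and>
     (\<forall>v \<in> carrier_vec p. v \<noteq> 0\<^sub>v p \<longrightarrow> v \<bullet> (A *\<^sub>v v) > 0)"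

(* ws is the list of eigenvalues of A (with algebraic multiplicity), in
   non-increasing order: ws ! 0 \<ge> ws ! 1 \<ge> ... *)
definition sorted_eigs :: "real mat \<Rightarrow> real list \<Rightarrow> bool" where
  "sorted_eigs A ws \<longleftrightarrow> length ws = dim_row A \<and> sorted_wrt (\<ge>) ws \<and>
     char_poly A = prod_list (map (\<lambda>w. [:-w, 1:]) ws)"

definition fobj :: "real mat \<Rightarrow> real mat \<Rightarrow> real" where
  "fobj S Th = - ln (det Th) + mtrace (S * Th)"

(* r_i (0-based index i, p = length om; paper's omega_{p-i+1} is om ! (p-1-i)) *)
definition rval :: "real list \<Rightarrow> nat \<Rightarrow> real" where
  "rval om i = sum_list om -
     (\<Sum>j\<in>{0..<length om} - {i}. ln (om ! (length om - 1 - j)) + 1)"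

definition root_set :: "real list \<Rightarrow> nat \<Rightarrow> real set" where
  "root_set om i = {x. x > 0 \<and> - ln x + x * (om ! (length om - 1 - i)) = rval om i}"

definition lam_min :: "real list \<Rightarrow> nat \<Rightarrow> real" where
  "lam_min om i = Min (root_set om i)"

definition lam_max :: "real list \<Rightarrow> nat \<Rightarrow> real" where
  "lam_max om i = Max (root_set om i)"

end

theory Submission
  imports Defs "HOL-Analysis.L2_Norm"
begin


definition hh :: "nat \<Rightarrow> real vec \<Rightarrow> real mat" where
  "hh n v = (let w = v - unit_vec n 0; c = w \<bullet> w; t = (if c = 0 then 0 else 2 / c) in
     mat n n (\<lambda>(i,j). of_bool (i = j) - t * w $ i * w $ j))"

lemma sum_delta_l: "(i::nat) < n \<Longrightarrow> (\<Sum>k<n. of_bool (i = k) * (f k :: real)) = f i"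
proof -
  assume i: "i < n"
  have "(\<Sum>k<n. of_bool (i = k) * (f k :: real)) = (\<Sum>k<n. if k = i then f k else 0)"
    by (rule sum.cong) auto
  also have "\<dots> = f i" using i by (subst sum.delta) auto
  finally show ?thesis .
qed
lemma sum_delta_r: "(i::nat) < n \<Longrightarrow> (\<Sum>k<n. (f k :: real) * of_bool (k = i)) = f i"
proof -
  assume i: "i < n"
  have "(\<Sum>k<n. (f k :: real) * of_bool (k = i)) = (\<Sum>k<n. if k = i then f k else 0)"
    by (rule sum.cong) auto
  also have "\<dots> = f i" using i by (subst sum.delta) auto
  finally show ?thesis .
qed

lemma hh_props:
  assumes v: "v \<in> carrier_vec n" and vv: "v \<bullet> v = 1" and n: "0 < n"
  shows "hh n v \<in> carrier_mat n n" "transpose_mat (hh n v) = hh n v"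
    "hh n v * hh n v = 1\<^sub>m n" "hh n v *\<^sub>v unit_vec n 0 = v"
proof -
  define w where "w = v - unit_vec n 0"
  define c where "c = w \<bullet> w"
  define t where "t = (if c = 0 then 0 else 2 / c)"
  have w: "w \<in> carrier_vec n" using v by (simp add: w_def)
  have H: "hh n v = mat n n (\<lambda>(i,j). of_bool (i = j) - t * w $ i * w $ j)"
    unfolding hh_def w_def c_def t_def Let_def by simp
  show "hh n v \<in> carrier_mat n n" unfolding H by simp
  show "transpose_mat (hh n v) = hh n v" unfolding H by (rule eq_matI) auto
  have csum: "c = (\<Sum>k<n. w $ k * w $ k)" using w
    by (simp add: c_def scalar_prod_def lessThan_atLeast0)
  have tc: "t * t * c = 2 * t" unfolding t_def by auto
  show "hh n v * hh n v = 1\<^sub>m n"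
  proof (rule eq_matI)
    fix i j assume i: "i < dim_row (1\<^sub>m n)" and j: "j < dim_col (1\<^sub>m n)"
    hence i: "i < n" and j: "j < n" by auto
    have "(hh n v * hh n v) $$ (i,j) = (\<Sum>k<n. (of_bool (i = k) - t * w $ i * w $ k) * (of_bool (k = j) - t * w $ k * w $ j))"
      using i j unfolding H by (simp add: scalar_prod_def lessThan_atLeast0)
    also have "\<dots> = (\<Sum>k<n. of_bool (i = k) * of_bool (k = j)) - t * w $ i * (\<Sum>k<n. w $ k * of_bool (k = j))
       - t * w $ j * (\<Sum>k<n. of_bool (i = k) * w $ k) + t * t * w $ i * w $ j * (\<Sum>k<n. w $ k * w $ k)"
    proof -
      have "\<And>k. (of_bool (i = k) - t * w $ i * w $ k) * (of_bool (k = j) - t * w $ k * w $ j) =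
        of_bool (i = k) * of_bool (k = j) - t * w $ i * (w $ k * of_bool (k = j))
       - t * w $ j * (of_bool (i = k) * w $ k) + t * t * w $ i * w $ j * (w $ k * w $ k)"
        by (simp add: algebra_simps)
      hence "(\<Sum>k<n. (of_bool (i = k) - t * w $ i * w $ k) * (of_bool (k = j) - t * w $ k * w $ j)) =
        (\<Sum>k<n. of_bool (i = k) * of_bool (k = j) - t * w $ i * (w $ k * of_bool (k = j))
       - t * w $ j * (of_bool (i = k) * w $ k) + t * t * w $ i * w $ j * (w $ k * w $ k))" by simp
      thus ?thesis by (simp only: sum.distrib sum_subtractf sum_distrib_left[symmetric])
    qed
    also have "\<dots> = of_bool (i = j) - 2 * t * w $ i * w $ j + t * t * c * w $ i * w $ j"
      using i j by (simp add: sum_delta_l sum_delta_r csum)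
    also have "\<dots> = of_bool (i = j)" using tc by simp
    finally show "(hh n v * hh n v) $$ (i,j) = 1\<^sub>m n $$ (i,j)" using i j by simp
  qed (auto simp: H)
  show "hh n v *\<^sub>v unit_vec n 0 = v"
  proof (rule eq_vecI)
    fix i assume "i < dim_vec v" hence i: "i < n" using v by auto
    have "(hh n v *\<^sub>v unit_vec n 0) $ i = of_bool (i = 0) - t * w $ i * w $ 0"
      using i n unfolding H by (simp add: scalar_prod_right_unit)
    also have "\<dots> = v $ i"
    proof (cases "c = 0")
      case True
      hence "(\<Sum>k<n. w $ k * w $ k) = 0" using csum by simp
      hence "\<forall>k\<in>{..<n}. w $ k * w $ k = 0" by (subst (asm) sum_nonneg_eq_0_iff) auto
      hence "w $ i = 0" using i by simp
      thus ?thesis using True i by (simp add: t_def w_def)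
    next
      case False
      have vsum: "(\<Sum>k<n. v $ k * v $ k) = 1" using vv v by (simp add: scalar_prod_def lessThan_atLeast0)
      have "c = (\<Sum>k<n. v $ k * v $ k - 2 * (v $ k * of_bool (k = 0)) + 1 * of_bool (k = 0))"
        unfolding csum w_def using v n by (intro sum.cong) (auto simp: algebra_simps)
      also have "\<dots> = (\<Sum>k<n. v $ k * v $ k) - 2 * v $ 0 + 1"
        using n by (simp add: sum.distrib sum_subtractf sum_distrib_left[symmetric] sum_delta_r del: mult_1)
      finally have "c = (\<Sum>k<n. v $ k * v $ k) - 2 * v $ 0 + 1" .
      hence c2: "c = 2 - 2 * v $ 0" using vsum by simp
      have "t * w $ 0 = -1" using False c2 n v unfolding t_def w_def by (auto simp: field_simps)
      have "t * w $ i * w $ 0 = w $ i * (t * w $ 0)" by (simp add: ac_simps)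
      also have "\<dots> = - w $ i" using \<open>t * w $ 0 = -1\<close> by simp
      finally show ?thesis using i v by (simp add: w_def)
    qed
    finally show "(hh n v *\<^sub>v unit_vec n 0) $ i = v $ i" .
  qed (use v in \<open>simp add: H\<close>)
qed


definition diagm :: "real list \<Rightarrow> real mat" where
  "diagm xs = mat (length xs) (length xs) (\<lambda>(i,j). if i = j then xs ! i else 0)"

lemma diagm_carrier[simp]: "diagm xs \<in> carrier_mat (length xs) (length xs)"
  by (simp add: diagm_def)

lemma char_poly_0: assumes "A \<in> carrier_mat 0 0" shows "char_poly A = 1"
proof -
  from degree_monic_char_poly[OF assms] have "degree (char_poly A) = 0" "coeff (char_poly A) 0 = 1" by auto
  thus ?thesis by (metis degree_0_id one_pCons)
qed

lemma sprod_self_sum: "(v :: real vec) \<bullet> v = (\<Sum>i<dim_vec v. v $ i * v $ i)"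
  by (simp add: scalar_prod_def lessThan_atLeast0)

lemma sprod_self_pos: assumes "v \<in> carrier_vec n" "v \<noteq> 0\<^sub>v n" shows "(v :: real vec) \<bullet> v > 0"
proof -
  have ge: "(\<Sum>i<n. v $ i * v $ i) \<ge> 0" by (intro sum_nonneg) auto
  have "(\<Sum>i<n. v $ i * v $ i) \<noteq> 0"
  proof
    assume "(\<Sum>i<n. v $ i * v $ i) = 0"
    hence "\<forall>k\<in>{..<n}. v $ k * v $ k = 0" by (subst (asm) sum_nonneg_eq_0_iff) auto
    hence "v = 0\<^sub>v n" using assms(1) by (intro eq_vecI) auto
    with assms(2) show False by simp
  qed
  with ge show ?thesis using assms(1) by (simp add: sprod_self_sum)
qed

lemma spectral:
  fixes A :: "real mat"
  assumes "A \<in> carrier_mat n n" "transpose_mat A = A" "char_poly A = (\<Prod>e\<leftarrow>es. [:-e,1:])"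
  shows "\<exists>U \<in> carrier_mat n n. transpose_mat U * U = 1\<^sub>m n \<and> A * U = U * diagm es \<and> length es = n"
  using assms
proof (induction es arbitrary: n A)
  case Nil
  have n: "n = 0" using degree_monic_char_poly[OF Nil(1)] Nil(3) by simp
  show ?case
    by (rule bexI[of _ "1\<^sub>m 0"], insert Nil(1) n, auto intro!: eq_matI simp: diagm_def)
next
  case (Cons e es n A)
  note A = Cons(2) and sym = Cons(3) and cp = Cons(4)
  have ev: "eigenvalue A e" unfolding eigenvalue_root_char_poly[OF A] cp by simp
  have n0: "n \<noteq> 0"
  proof
    assume "n = 0"
    hence "char_poly A = 1" using char_poly_0 A by simp
    hence "poly (char_poly A) e = 1" by simp
    with ev show False unfolding eigenvalue_root_char_poly[OF A] by simp
  qed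
  then obtain m where nm: "n = Suc m" by (cases n) auto
  define v0 where "v0 = find_eigenvector A e"
  have ev0: "eigenvector A v0 e" unfolding v0_def by (rule find_eigenvector[OF A ev])
  hence v0: "v0 \<in> carrier_vec n" "v0 \<noteq> 0\<^sub>v n" "A *\<^sub>v v0 = e \<cdot>\<^sub>v v0"
    unfolding eigenvector_def using A by auto
  define s where "s = v0 \<bullet> v0"
  have spos: "s > 0" using sprod_self_pos[OF v0(1,2)] by (simp add: s_def)
  define v where "v = (1 / sqrt s) \<cdot>\<^sub>v v0"
  have v: "v \<in> carrier_vec n" using v0 by (simp add: v_def)
  have vv: "v \<bullet> v = 1" using v0 spos unfolding v_def s_def by simp
  have Av: "A *\<^sub>v v = e \<cdot>\<^sub>v v" using v0 A unfolding v_def by (auto simp: mult_mat_vec smult_smult_assoc mult.commute)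
  define H where "H = hh n v"
  have H: "H \<in> carrier_mat n n" "transpose_mat H = H" "H * H = 1\<^sub>m n" "H *\<^sub>v unit_vec n 0 = v"
    using hh_props[OF v vv] n0 unfolding H_def by auto
  define A' where "A' = H * A * H"
  have A': "A' \<in> carrier_mat n n" using H A by (simp add: A'_def)
  have symA': "transpose_mat A' = A'"
  proof -
    have "transpose_mat (H * A * H) = transpose_mat H * transpose_mat (H * A)"
      by (rule transpose_mult) (use H A in auto)
    also have "transpose_mat (H * A) = transpose_mat A * transpose_mat H"
      by (rule transpose_mult) (use H A in auto)
    finally show ?thesis unfolding A'_def using H A sym by simp
  qed
  have A'e0: "A' *\<^sub>v unit_vec n 0 = e \<cdot>\<^sub>v unit_vec n 0"
  proof -
    have "A' *\<^sub>v unit_vec n 0 = H *\<^sub>v (A *\<^sub>v (H *\<^sub>v unit_vec n 0))"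
    proof -
      have u: "unit_vec n 0 \<in> carrier_vec n" by simp
      have "A' *\<^sub>v unit_vec n 0 = H *\<^sub>v ((A * H) *\<^sub>v unit_vec n 0)"
        unfolding A'_def using assoc_mult_mat_vec[OF H(1) mult_carrier_mat[OF A H(1)] u] H A by simp
      also have "(A * H) *\<^sub>v unit_vec n 0 = A *\<^sub>v (H *\<^sub>v unit_vec n 0)"
        using assoc_mult_mat_vec[OF A H(1) u] .
      finally show ?thesis .
    qed
    also have "\<dots> = e \<cdot>\<^sub>v (H *\<^sub>v v)" unfolding H(4) Av using H v by (simp add: mult_mat_vec)
    also have "H *\<^sub>v v = unit_vec n 0"
    proof -
      have "H *\<^sub>v v = (H * H) *\<^sub>v unit_vec n 0"
        using assoc_mult_mat_vec[OF H(1) H(1), of "unit_vec n 0"] H(4) by simp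
      thus ?thesis using H(3) by simp
    qed
    finally show ?thesis .
  qed
  have col0: "A' $$ (i, 0) = (if i = 0 then e else 0)" if "i < n" for i
  proof -
    have "A' $$ (i, 0) = (A' *\<^sub>v unit_vec n 0) $ i" using that A' n0 by (simp add: scalar_prod_right_unit)
    thus ?thesis using A'e0 that by simp
  qed
  have row0: "A' $$ (0, j) = (if j = 0 then e else 0)" if "j < n" for j
  proof -
    have "A' $$ (0, j) = transpose_mat A' $$ (j, 0)" using that A' n0 by simp
    thus ?thesis using symA' col0[OF that] by simp
  qed
  define A3 where "A3 = mat m m (\<lambda>(i,j). A' $$ (Suc i, Suc j))"
  define A1 :: "real mat" where "A1 = mat 1 1 (\<lambda>_. e)"
  have A3: "A3 \<in> carrier_mat m m" by (simp add: A3_def)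
  have A1: "A1 \<in> carrier_mat 1 1" by (simp add: A1_def)
  have blk: "A' = four_block_mat A1 (0\<^sub>m 1 m) (0\<^sub>m m 1) A3"
  proof (rule eq_matI)
    fix i j assume ij: "i < dim_row (four_block_mat A1 (0\<^sub>m 1 m) (0\<^sub>m m 1) A3)"
       "j < dim_col (four_block_mat A1 (0\<^sub>m 1 m) (0\<^sub>m m 1) A3)"
    hence i: "i < n" and j: "j < n" using A1 A3 nm by auto
    show "A' $$ (i, j) = four_block_mat A1 (0\<^sub>m 1 m) (0\<^sub>m m 1) A3 $$ (i, j)"
      using i j A1 A3 nm col0 row0 by (cases i; cases j) (auto simp: A1_def A3_def)
  qed (use A' A1 A3 nm in auto)
  have "similar_mat A' A"
    unfolding similar_mat_def similar_mat_wit_def Let_def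
    by (rule exI[of _ H], rule exI[of _ H]) (use A' A H in \<open>auto simp: A'_def\<close>)
  from char_poly_similar[OF this] have c1: "char_poly A' = char_poly A" .
  have c2: "char_poly A' = char_poly A1 * char_poly A3"
    unfolding blk by (rule char_poly_four_block_zeros_col[OF A1 _ A3]) simp
  have c3: "char_poly A1 = [:-e, 1:]"
    by (simp add: A1_def char_poly_defs det_def sign_def)
  have "[:-e, 1:] * char_poly A3 = [:-e, 1:] * (\<Prod>e\<leftarrow>es. [:-e,1:])"
    using c1 c2 c3 cp by simp
  hence cp3: "char_poly A3 = (\<Prod>e\<leftarrow>es. [:-e,1:])"
    using mult_left_cancel[of "[:-e, 1:]" "char_poly A3" "(\<Prod>e\<leftarrow>es. [:-e,1:])"] by simp
  have sym3: "transpose_mat A3 = A3"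
  proof (rule eq_matI)
    fix i j assume "i < dim_row A3" "j < dim_col A3"
    hence i: "i < m" and j: "j < m" using A3 by auto
    have "A' $$ (Suc j, Suc i) = transpose_mat A' $$ (Suc i, Suc j)" using i j A' nm by simp
    thus "transpose_mat A3 $$ (i, j) = A3 $$ (i, j)" using symA' i j by (simp add: A3_def)
  qed (use A3 in auto)
  from Cons.IH[OF A3 sym3 cp3] obtain U3 where U3: "U3 \<in> carrier_mat m m"
    "transpose_mat U3 * U3 = 1\<^sub>m m" "A3 * U3 = U3 * diagm es" "length es = m" by auto
  define B where "B = four_block_mat (1\<^sub>m 1) (0\<^sub>m 1 m) (0\<^sub>m m 1) U3"
  have B: "B \<in> carrier_mat n n" unfolding B_def using U3 nm by auto
  define U where "U = H * B"
  have U: "U \<in> carrier_mat n n" unfolding U_def using H B by auto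
  have Bt: "transpose_mat B = four_block_mat (1\<^sub>m 1) (0\<^sub>m 1 m) (0\<^sub>m m 1) (transpose_mat U3)"
    unfolding B_def by (subst transpose_four_block_mat) (use U3 in auto)
  have BB: "transpose_mat B * B = 1\<^sub>m n"
    unfolding Bt unfolding B_def
    by (subst mult_four_block_mat) (use U3 nm in \<open>auto simp: four_block_one_mat[of 1 m, simplified]\<close>)
  have UU: "transpose_mat U * U = 1\<^sub>m n"
  proof -
    have "transpose_mat U = transpose_mat B * transpose_mat H" unfolding U_def
      by (rule transpose_mult) (use H B in auto)
    have Bt: "transpose_mat B \<in> carrier_mat n n" using B by simp
    have "transpose_mat B * H * (H * B) = transpose_mat B * (H * (H * B))"
      using assoc_mult_mat[OF Bt H(1) mult_carrier_mat[OF H(1) B]] .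
    also have "H * (H * B) = (H * H) * B" using assoc_mult_mat[OF H(1) H(1) B] by simp
    also have "\<dots> = B" using H(3) B by simp
    finally show ?thesis using \<open>transpose_mat U = transpose_mat B * transpose_mat H\<close> H(2) BB
      unfolding U_def by simp
  qed
  have D: "diagm (e # es) = four_block_mat A1 (0\<^sub>m 1 m) (0\<^sub>m m 1) (diagm es)"
    by (rule eq_matI) (use U3 nm in \<open>auto simp: diagm_def A1_def\<close>)
  have AH: "A * H = H * A'"
  proof -
    have "H * A' = H * (H * (A * H))" unfolding A'_def using H A by simp
    also have "\<dots> = (H * H) * (A * H)" using assoc_mult_mat[OF H(1) H(1) mult_carrier_mat[OF A H(1)]] by simp
    also have "\<dots> = A * H" using H A by simp
    finally show ?thesis by simp
  qed
  have "A * U = H * (A' * B)" unfolding U_def using A H B AH A'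
    by (simp flip: assoc_mult_mat[of A n n H n B n])
  also have "A' * B = four_block_mat A1 (0\<^sub>m 1 m) (0\<^sub>m m 1) (A3 * U3)"
    unfolding blk B_def by (subst mult_four_block_mat) (use A1 A3 U3 in auto)
  also have "\<dots> = B * diagm (e # es)"
    unfolding D B_def U3(3) by (subst mult_four_block_mat) (use A1 A3 U3 in \<open>auto simp: left_mult_zero_mat[OF diagm_carrier]\<close>)
  finally have "A * U = H * (B * diagm (e # es))" unfolding U_def .
  moreover have Dc: "diagm (e # es) \<in> carrier_mat n n" using U3(4) nm diagm_carrier[of "e # es"] by simp
  ultimately have "A * U = U * diagm (e # es)" unfolding U_def using assoc_mult_mat[OF H(1) B Dc] by simp
  thus ?case using U UU U3 nm by auto
qed


lemma mat_entry_sum: "A \<in> carrier_mat nr n \<Longrightarrow> B \<in> carrier_mat n nc \<Longrightarrow> i < nr \<Longrightarrow> j < nc \<Longrightarrow>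
  (A * B) $$ (i,j) = (\<Sum>k<n. A $$ (i,k) * B $$ (k,j))"
  by (simp add: scalar_prod_def lessThan_atLeast0)

lemma spectral_idx:
  fixes A :: "real mat"
  assumes A: "A \<in> carrier_mat n n" and sym: "transpose_mat A = A" and cp: "char_poly A = (\<Prod>e\<leftarrow>es. [:-e,1:])"
  shows "\<exists>U \<in> carrier_mat n n. (\<forall>k<n. \<forall>l<n. (\<Sum>i<n. U $$ (i,k) * U $$ (i,l)) = of_bool (k = l))
     \<and> (\<forall>i<n. \<forall>j<n. (\<Sum>k<n. U $$ (i,k) * U $$ (j,k)) = of_bool (i = j))
     \<and> (\<forall>i<n. \<forall>j<n. A $$ (i,j) = (\<Sum>k<n. es ! k * U $$ (i,k) * U $$ (j,k)))
     \<and> length es = n \<and> A = U * diagm es * transpose_mat U"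
proof -
  from spectral[OF assms] obtain U where U: "U \<in> carrier_mat n n" and UU: "transpose_mat U * U = 1\<^sub>m n"
    and AU: "A * U = U * diagm es" and len: "length es = n" by auto
  have Ut: "transpose_mat U \<in> carrier_mat n n" using U by simp
  have UU': "U * transpose_mat U = 1\<^sub>m n" using mat_mult_left_right_inverse[OF Ut U UU] .
  have D: "diagm es \<in> carrier_mat n n" using diagm_carrier[of es] unfolding len .
  have o1: "(\<Sum>i<n. U $$ (i,k) * U $$ (i,l)) = of_bool (k = l)" if "k < n" "l < n" for k l
  proof -
    have "(\<Sum>i<n. U $$ (i,k) * U $$ (i,l)) = (transpose_mat U * U) $$ (k,l)"
      using mat_entry_sum[OF Ut U that] that U by simp
    also have "\<dots> = of_bool (k = l)" unfolding UU using that by simp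
    finally show ?thesis .
  qed
  have o2: "(\<Sum>k<n. U $$ (i,k) * U $$ (j,k)) = of_bool (i = j)" if "i < n" "j < n" for i j
  proof -
    have "(\<Sum>k<n. U $$ (i,k) * U $$ (j,k)) = (U * transpose_mat U) $$ (i,j)"
      using mat_entry_sum[OF U Ut that] that U by simp
    also have "\<dots> = of_bool (i = j)" unfolding UU' using that by simp
    finally show ?thesis .
  qed
  have Arep: "A = U * diagm es * transpose_mat U"
  proof -
    have "A = A * (U * transpose_mat U)" using UU' A by simp
    also have "\<dots> = (A * U) * transpose_mat U" using A U Ut by simp
    finally show ?thesis unfolding AU .
  qed
  have UD: "(U * diagm es) $$ (i,m) = U $$ (i,m) * es ! m" if "i < n" "m < n" for i m
  proof -
    have "(U * diagm es) $$ (i,m) = (\<Sum>k<n. U $$ (i,k) * diagm es $$ (k,m))"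
      using mat_entry_sum[OF U D that] .
    also have "\<dots> = (\<Sum>k<n. (U $$ (i,k) * es ! k) * of_bool (k = m))"
      by (rule sum.cong) (use len that in \<open>auto simp: diagm_def\<close>)
    also have "\<dots> = U $$ (i,m) * es ! m" using sum_delta_r[OF that(2)] .
    finally show ?thesis .
  qed
  have o3: "A $$ (i,j) = (\<Sum>k<n. es ! k * U $$ (i,k) * U $$ (j,k))" if "i < n" "j < n" for i j
  proof -
    have "A $$ (i,j) = (\<Sum>k<n. (U * diagm es) $$ (i,k) * transpose_mat U $$ (k,j))"
      using mat_entry_sum[OF mult_carrier_mat[OF U D] Ut that] Arep by simp
    also have "\<dots> = (\<Sum>k<n. es ! k * U $$ (i,k) * U $$ (j,k))"
      by (rule sum.cong) (use that UD U in auto)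
    finally show ?thesis .
  qed
  show ?thesis using U o1 o2 o3 len Arep by blast
qed

lemma sum4_perm: "(\<Sum>i<n. \<Sum>j<n. \<Sum>k<n. \<Sum>l<n. (f i j k l :: real)) = (\<Sum>k<n. \<Sum>l<n. \<Sum>i<n. \<Sum>j<n. f i j k l)"
proof -
  have "(\<Sum>i<n. \<Sum>j<n. \<Sum>k<n. \<Sum>l<n. f i j k l) = (\<Sum>i<n. \<Sum>k<n. \<Sum>j<n. \<Sum>l<n. f i j k l)"
    by (rule sum.cong[OF refl], rule sum.swap)
  also have "\<dots> = (\<Sum>k<n. \<Sum>i<n. \<Sum>j<n. \<Sum>l<n. f i j k l)" by (rule sum.swap)
  also have "\<dots> = (\<Sum>k<n. \<Sum>i<n. \<Sum>l<n. \<Sum>j<n. f i j k l)"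
    by (rule sum.cong[OF refl], rule sum.cong[OF refl], rule sum.swap)
  also have "\<dots> = (\<Sum>k<n. \<Sum>l<n. \<Sum>i<n. \<Sum>j<n. f i j k l)"
    by (rule sum.cong[OF refl], rule sum.swap)
  finally show ?thesis .
qed

lemma quad_sum:
  fixes a b :: "nat \<Rightarrow> real" and U V :: "nat \<Rightarrow> nat \<Rightarrow> real"
  shows "(\<Sum>i<n. \<Sum>j<n. (\<Sum>k<n. a k * U i k * U j k) * (\<Sum>l<n. b l * V j l * V i l))
    = (\<Sum>k<n. \<Sum>l<n. a k * b l * (\<Sum>i<n. U i k * V i l)\<^sup>2)"
proof -
  have "(\<Sum>i<n. \<Sum>j<n. (\<Sum>k<n. a k * U i k * U j k) * (\<Sum>l<n. b l * V j l * V i l))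
     = (\<Sum>i<n. \<Sum>j<n. \<Sum>k<n. \<Sum>l<n. a k * b l * ((U i k * V i l) * (U j k * V j l)))"
    by (simp add: sum_product algebra_simps)
  also have "\<dots> = (\<Sum>k<n. \<Sum>l<n. \<Sum>i<n. \<Sum>j<n. a k * b l * ((U i k * V i l) * (U j k * V j l)))"
    by (rule sum4_perm)
  also have "\<dots> = (\<Sum>k<n. \<Sum>l<n. a k * b l * (\<Sum>i<n. U i k * V i l)\<^sup>2)"
  proof (intro sum.cong refl)
    fix k l
    have "(\<Sum>i<n. U i k * V i l)\<^sup>2 = (\<Sum>i<n. \<Sum>j<n. (U i k * V i l) * (U j k * V j l))"
      by (simp only: power2_eq_square sum_product)
    thus "(\<Sum>i<n. \<Sum>j<n. a k * b l * ((U i k * V i l) * (U j k * V j l))) = a k * b l * (\<Sum>i<n. U i k * V i l)\<^sup>2"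
      by (simp only: sum_distrib_left)
  qed
  finally show ?thesis .
qed


lemma abel_sum: "(\<Sum>l<n. la l * c l) = (\<Sum>m<n. (la m - la (Suc m)) * (\<Sum>l\<le>m. c l)) + la n * (\<Sum>l<n. c l)"
  for la c :: "nat \<Rightarrow> real"
proof (induction n)
  case (Suc n)
  have e: "(\<Sum>l\<le>n. c l) = (\<Sum>l<n. c l) + c n" by (simp add: lessThan_Suc_atMost[symmetric])
  show ?case using Suc by (simp add: e algebra_simps)
qed simp

lemma lp_bound:
  fixes om q :: "nat \<Rightarrow> real"
  assumes dec: "\<And>i j. i \<le> j \<Longrightarrow> j < n \<Longrightarrow> om j \<le> om i"
    and q0: "\<And>k. k < n \<Longrightarrow> 0 \<le> q k" and q1: "\<And>k. k < n \<Longrightarrow> q k \<le> 1"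
    and qs: "(\<Sum>k<n. q k) = real t" and t: "1 \<le> t" "t \<le> n"
  shows "(\<Sum>k<n. om k * q k) \<ge> (\<Sum>k\<in>{n-t..<n}. om k)"
proof -
  define s where "s = n - t"
  define th where "th = om s"
  have sn: "s < n" "s \<le> n" using t by (auto simp: s_def)
  have split: "{..<n} = {..<s} \<union> {s..<n}" using sn by auto
  have disj: "{..<s} \<inter> {s..<n} = {}" by auto
  have A: "(\<Sum>k<n. om k * q k) = (\<Sum>k<s. om k * q k) + (\<Sum>k\<in>{s..<n}. om k * q k)"
    by (subst split, rule sum.union_disjoint) auto
  have Q: "real t = (\<Sum>k<s. q k) + (\<Sum>k\<in>{s..<n}. q k)"
    unfolding qs[symmetric] by (subst split, rule sum.union_disjoint) auto
  have cardt: "real (card {s..<n}) = real t" using t by (simp add: s_def)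
  have B1: "(\<Sum>k<s. om k * q k) \<ge> (\<Sum>k<s. th * q k)"
    by (rule sum_mono) (use sn dec q0 in \<open>auto simp: th_def intro!: mult_right_mono\<close>)
  have B2: "(\<Sum>k\<in>{s..<n}. om k * (1 - q k)) \<le> (\<Sum>k\<in>{s..<n}. th * (1 - q k))"
    by (rule sum_mono) (use sn dec q1 in \<open>auto simp: th_def intro!: mult_right_mono\<close>)
  have "(\<Sum>k\<in>{s..<n}. om k * q k) = (\<Sum>k\<in>{s..<n}. om k) - (\<Sum>k\<in>{s..<n}. om k * (1 - q k))"
    by (simp add: algebra_simps sum_subtractf)
  moreover have "(\<Sum>k\<in>{s..<n}. th * (1 - q k)) = th * real t - th * (\<Sum>k\<in>{s..<n}. q k)"
    using cardt by (simp add: sum_subtractf sum_distrib_left[symmetric] algebra_simps)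
  moreover have "(\<Sum>k<s. th * q k) = th * (\<Sum>k<s. q k)" by (simp add: sum_distrib_left)
  ultimately show ?thesis using A B1 B2 Q unfolding s_def[symmetric]
    by (simp add: algebra_simps) 
qed

lemma ds_ineq:
  fixes om la :: "nat \<Rightarrow> real" and P :: "nat \<Rightarrow> nat \<Rightarrow> real"
  assumes omd: "\<And>i j. i \<le> j \<Longrightarrow> j < n \<Longrightarrow> om j \<le> om i"
    and lad: "\<And>i j. i \<le> j \<Longrightarrow> j < n \<Longrightarrow> la j \<le> la i"
    and la0: "\<And>i. i < n \<Longrightarrow> 0 \<le> la i"
    and P0: "\<And>k l. k < n \<Longrightarrow> l < n \<Longrightarrow> 0 \<le> P k l"
    and Pr: "\<And>k. k < n \<Longrightarrow> (\<Sum>l<n. P k l) = 1"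
    and Pc: "\<And>l. l < n \<Longrightarrow> (\<Sum>k<n. P k l) = 1"
  shows "(\<Sum>k<n. \<Sum>l<n. om k * la l * P k l) \<ge> (\<Sum>l<n. la l * om (n - 1 - l))"
proof -
  define la' where "la' l = (if l < n then la l else 0)" for l
  define c where "c l = (\<Sum>k<n. om k * P k l)" for l
  define c' where "c' l = om (n - 1 - l)" for l
  have L: "(\<Sum>k<n. \<Sum>l<n. om k * la l * P k l) = (\<Sum>l<n. la' l * c l)"
    unfolding c_def la'_def by (subst sum.swap) (simp add: sum_distrib_left algebra_simps)
  have R: "(\<Sum>l<n. la l * om (n - 1 - l)) = (\<Sum>l<n. la' l * c' l)"
    unfolding c'_def la'_def by simp
  have ab: "(\<Sum>l<n. la' l * f l) = (\<Sum>m<n. (la' m - la' (Suc m)) * (\<Sum>l\<le>m. f l))" for f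
    using abel_sum[of la' f n] by (simp add: la'_def)
  have d0: "la' m - la' (Suc m) \<ge> 0" if "m < n" for m
    using that lad la0 unfolding la'_def by auto
  have key: "(\<Sum>l\<le>m. c l) \<ge> (\<Sum>l\<le>m. c' l)" if m: "m < n" for m
  proof -
    define q where "q k = (\<Sum>l\<le>m. P k l)" for k
    have "(\<Sum>l\<le>m. c l) = (\<Sum>k<n. om k * q k)"
      unfolding c_def q_def by (subst sum.swap) (simp add: sum_distrib_left)
    also have "\<dots> \<ge> (\<Sum>k\<in>{n - Suc m..<n}. om k)"
    proof (rule lp_bound[OF omd])
      show "0 \<le> q k" if "k < n" for k unfolding q_def using P0 that m by (intro sum_nonneg) auto
      show "q k \<le> 1" if "k < n" for k
      proof -
        have "q k \<le> (\<Sum>l<n. P k l)" unfolding q_def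
          by (rule sum_mono2) (use m P0 that in auto)
        thus ?thesis using Pr that by simp
      qed
      show "(\<Sum>k<n. q k) = real (Suc m)" unfolding q_def
        by (subst sum.swap) (use Pc m in simp)
    qed (use m in auto)
    also have "(\<Sum>k\<in>{n - Suc m..<n}. om k) = (\<Sum>l\<le>m. c' l)"
      unfolding c'_def
      by (rule sum.reindex_bij_witness[of _ "\<lambda>l. n - 1 - l" "\<lambda>k. n - 1 - k"]) (use m in auto)
    finally show ?thesis .
  qed
  have "(\<Sum>m<n. (la' m - la' (Suc m)) * (\<Sum>l\<le>m. c' l)) \<le> (\<Sum>m<n. (la' m - la' (Suc m)) * (\<Sum>l\<le>m. c l))"
    by (rule sum_mono) (use key d0 in \<open>auto intro: mult_left_mono\<close>)
  thus ?thesis unfolding L R ab .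
qed


lemma ln_less_minus_one: assumes "0 < (z::real)" "z \<noteq> 1" shows "ln z < z - 1"
proof -
  have s: "sqrt z > 0" "sqrt z \<noteq> 1" using assms by auto
  have "ln z = 2 * ln (sqrt z)" using assms by (simp add: ln_sqrt)
  also have "\<dots> \<le> 2 * (sqrt z - 1)" using ln_le_minus_one[OF s(1)] by simp
  also have "\<dots> < z - 1"
  proof -
    have "0 < (sqrt z - 1)\<^sup>2" using s by simp
    thus ?thesis using assms by (simp add: power2_eq_square algebra_simps)
  qed
  finally show ?thesis .
qed

lemma g_lower: fixes w x :: real assumes "0 < w" "0 < x" shows "ln w + 1 \<le> - ln x + x * w"
proof -
  have "ln (x * w) \<le> x * w - 1" using assms by (intro ln_le_minus_one) simp
  thus ?thesis using assms by (simp add: ln_mult)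
qed

lemma g_dec: fixes w x y :: real assumes w: "0 < w" and xy: "0 < x" "x < y" "y \<le> 1 / w"
  shows "- ln y + y * w < - ln x + x * w"
proof -
  have y: "0 < y" using xy by simp
  have "ln (x / y) < x / y - 1" using xy by (intro ln_less_minus_one) auto
  hence "ln x - ln y < x / y - 1" using xy by (simp add: ln_div)
  moreover have "(y - x) * w \<le> (y - x) / y"
  proof -
    have "w \<le> 1 / y" using xy w y by (simp add: field_simps)
    hence "(y - x) * w \<le> (y - x) * (1 / y)" using xy by (intro mult_left_mono) auto
    thus ?thesis by simp
  qed
  moreover have "x / y - 1 = - ((y - x) / y)" using y by (simp add: field_simps)
  ultimately show ?thesis by (simp add: algebra_simps)
qed

lemma g_inc: fixes w x y :: real assumes w: "0 < w" and xy: "1 / w \<le> x" "x < y"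
  shows "- ln x + x * w < - ln y + y * w"
proof -
  have "0 < 1 / w" using w by simp
  hence x: "0 < x" using xy by linarith
  have "ln (y / x) < y / x - 1" using xy x by (intro ln_less_minus_one) auto
  hence "ln y - ln x < y / x - 1" using xy x by (simp add: ln_div)
  moreover have "(y - x) / x \<le> (y - x) * w"
  proof -
    have "1 / x \<le> w" using xy w x by (simp add: field_simps)
    hence "(y - x) * (1 / x) \<le> (y - x) * w" using xy by (intro mult_left_mono) auto
    thus ?thesis by simp
  qed
  moreover have "y / x - 1 = (y - x) / x" using x by (simp add: field_simps)
  ultimately show ?thesis by (simp add: algebra_simps)
qed

lemma g_cont: "0 < (a::real) \<Longrightarrow> continuous_on {a..b} (\<lambda>x. - ln x + x * (w::real))"
  by (intro continuous_intros) auto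

lemma g_roots:
  fixes w r :: real
  assumes w: "0 < w" and r: "ln w + 1 < r"
  shows "\<exists>a b. 0 < a \<and> a < b \<and> {x. 0 < x \<and> - ln x + x * w = r} = {a, b} \<and>
     (\<forall>x. 0 < x \<and> (x < a \<or> b < x) \<longrightarrow> r < - ln x + x * w)"
proof -
  define g where "g x = - ln x + x * w" for x
  define m where "m = 1 / w"
  have m: "0 < m" using w by (simp add: m_def)
  have gm: "g m = ln w + 1" using w by (simp add: g_def m_def ln_div)
  define x0 where "x0 = min (exp (- r - 1)) (1 / (2 * w))"
  have x0: "0 < x0" "x0 < m" using w by (auto simp: x0_def m_def min_def field_simps)
  have "ln x0 \<le> - r - 1" 
  proof -
    have "ln x0 \<le> ln (exp (- r - 1))" using x0 by (subst ln_le_cancel_iff) (auto simp: x0_def)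
    thus ?thesis by simp
  qed
  moreover have "0 < x0 * w" using x0 w by simp
  ultimately have gx0: "r < g x0" by (simp add: g_def)
  define K where "K = \<bar>r\<bar> + \<bar>ln (w / 2)\<bar> + 1"
  define x1 where "x1 = max (2 / w) ((2 / w) * K)"
  have x1: "m < x1" "0 < x1" using w by (auto simp: x1_def m_def K_def field_simps max_def)
  have "r < g x1"
  proof -
    have l1: "ln (x1 * (w / 2)) \<le> x1 * (w / 2) - 1" using x1 w by (intro ln_le_minus_one) auto
    have l2: "ln (x1 * (w / 2)) = ln x1 + ln (w / 2)" using ln_mult[of x1 "w/2"] x1 w by fastforce
    have "ln x1 \<le> x1 * w / 2 - 1 - ln (w / 2)" using l1 l2 by linarith
    moreover have "x1 * w / 2 \<ge> K"
    proof -
      have "x1 \<ge> (2 / w) * K" by (simp add: x1_def)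
      hence "x1 * w \<ge> (2 / w) * K * w" using w by (intro mult_right_mono) auto
      thus ?thesis using w by (simp add: field_simps)
    qed
    ultimately show ?thesis unfolding g_def K_def using abs_ge_self[of r] abs_ge_minus_self[of "ln (w/2)"] by linarith
  qed
  note gx1 = this
  have rm: "g m < r" using gm r by simp
  obtain a where a: "x0 \<le> a" "a \<le> m" "g a = r"
    using IVT2'[of g m r x0] g_cont[OF x0(1), of m w] gx0 rm x0 unfolding g_def by fastforce
  obtain b where b: "m \<le> b" "b \<le> x1" "g b = r"
    using IVT'[of g m r x1] g_cont[OF m, of x1 w] gx1 rm x1 unfolding g_def by fastforce
  have am: "a < m" using a rm by (cases "a = m") auto
  have bm: "m < b" using b rm by (cases "b = m") auto
  have a0: "0 < a" using a x0 by simp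
  have dec: "g y < g x" if "0 < x" "x < y" "y \<le> m" for x y
    using g_dec[OF w that(1,2)] that(3) unfolding g_def m_def by simp
  have inc: "g x < g y" if "m \<le> x" "x < y" for x y
    using g_inc[OF w] that unfolding g_def m_def by simp
  have out: "r < g x" if "0 < x" "x < a \<or> b < x" for x
    using that dec[of x a] inc[of b x] a b am bm by auto
  have "{x. 0 < x \<and> g x = r} = {a, b}"
  proof (intro equalityI subsetI)
    fix x assume "x \<in> {x. 0 < x \<and> g x = r}"
    hence x: "0 < x" "g x = r" by auto
    have "x = a \<or> x = b"
    proof (rule ccontr)
      assume ne: "\<not> (x = a \<or> x = b)"
      show False
      proof (cases "x < a \<or> b < x")
        case True thus False using out[OF x(1)] x by simp
      next
        case False
        hence "a < x" "x < b" using ne by auto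
        thus False using dec[of a x] inc[of x b] a b x a0 by (cases "x \<le> m") auto
      qed
    qed
    thus "x \<in> {a, b}" by auto
  qed (use a b a0 am bm in auto)
  thus ?thesis using a0 am bm out unfolding g_def by (intro exI[of _ a] exI[of _ b]) auto
qed


lemma sum_delta_both: "(\<Sum>i<(n::nat). \<Sum>j<n. of_bool (i = j) * (f i j :: real)) = (\<Sum>i<n. f i i)"
proof (rule sum.cong[OF refl])
  fix i assume "i \<in> {..<n}"
  thus "(\<Sum>j<n. of_bool (i = j) * f i j) = f i i" using sum_delta_l[of i n "f i"] by simp
qed

lemma quad_sum_orth:
  fixes a b :: "nat \<Rightarrow> real" and U :: "nat \<Rightarrow> nat \<Rightarrow> real"
  assumes o1: "\<And>k l. k < n \<Longrightarrow> l < n \<Longrightarrow> (\<Sum>i<n. U i k * U i l) = of_bool (k = l)"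
  shows "(\<Sum>i<n. \<Sum>j<n. (\<Sum>k<n. a k * U i k * U j k) * (\<Sum>l<n. b l * U j l * U i l)) = (\<Sum>k<n. a k * b k)"
proof -
  have "(\<Sum>i<n. \<Sum>j<n. (\<Sum>k<n. a k * U i k * U j k) * (\<Sum>l<n. b l * U j l * U i l))
    = (\<Sum>k<n. \<Sum>l<n. a k * b l * (\<Sum>i<n. U i k * U i l)\<^sup>2)" by (rule quad_sum)
  also have "\<dots> = (\<Sum>k<n. \<Sum>l<n. of_bool (k = l) * (a k * b l))"
    by (intro sum.cong refl) (simp add: o1)
  also have "\<dots> = (\<Sum>k<n. a k * b k)" by (rule sum_delta_both)
  finally show ?thesis .
qed

lemma prod_form:
  fixes a b :: "nat \<Rightarrow> real" and V :: "nat \<Rightarrow> nat \<Rightarrow> real"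
  assumes o1: "\<And>k l. k < n \<Longrightarrow> l < n \<Longrightarrow> (\<Sum>i<n. V i k * V i l) = of_bool (k = l)"
  shows "(\<Sum>l<n. (\<Sum>k<n. a k * V i k * V l k) * (\<Sum>m<n. b m * V l m * V j m)) = (\<Sum>k<n. a k * b k * V i k * V j k)"
proof -
  have "(\<Sum>l<n. (\<Sum>k<n. a k * V i k * V l k) * (\<Sum>m<n. b m * V l m * V j m))
     = (\<Sum>l<n. \<Sum>k<n. \<Sum>m<n. (a k * b m * V i k * V j m) * (V l k * V l m))"
    by (simp add: sum_product algebra_simps)
  also have "\<dots> = (\<Sum>k<n. \<Sum>m<n. \<Sum>l<n. (a k * b m * V i k * V j m) * (V l k * V l m))"
  proof -
    have "(\<Sum>l<n. \<Sum>k<n. \<Sum>m<n. (a k * b m * V i k * V j m) * (V l k * V l m))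
      = (\<Sum>k<n. \<Sum>l<n. \<Sum>m<n. (a k * b m * V i k * V j m) * (V l k * V l m))" by (rule sum.swap)
    also have "\<dots> = (\<Sum>k<n. \<Sum>m<n. \<Sum>l<n. (a k * b m * V i k * V j m) * (V l k * V l m))"
      by (rule sum.cong[OF refl], rule sum.swap)
    finally show ?thesis .
  qed
  also have "\<dots> = (\<Sum>k<n. \<Sum>m<n. (a k * b m * V i k * V j m) * of_bool (m = k))"
  proof (intro sum.cong refl)
    fix k m assume k: "k \<in> {..<n}" and m: "m \<in> {..<n}"
    have o: "(\<Sum>l<n. V l k * V l m) = of_bool (m = k)" using o1[of k m] k m by (cases "k = m") auto
    show "(\<Sum>l<n. (a k * b m * V i k * V j m) * (V l k * V l m)) = (a k * b m * V i k * V j m) * of_bool (m = k)"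
      by (simp only: sum_distrib_left[symmetric] o)
  qed
  also have "\<dots> = (\<Sum>k<n. a k * b k * V i k * V j k)"
  proof (rule sum.cong[OF refl])
    fix k assume "k \<in> {..<n}"
    thus "(\<Sum>m<n. (a k * b m * V i k * V j m) * of_bool (m = k)) = a k * b k * V i k * V j k"
      using sum_delta_r[of k n "\<lambda>m. a k * b m * V i k * V j m"] by simp
  qed
  finally show ?thesis .
qed

lemma sorted_eigs_dec: "sorted_eigs A es \<Longrightarrow> i \<le> j \<Longrightarrow> j < length es \<Longrightarrow> es ! j \<le> es ! i"
  unfolding sorted_eigs_def by (cases "i = j") (auto simp: sorted_wrt_iff_nth_less)

lemma spd_decomp:
  assumes spd: "spd p A" and se: "sorted_eigs A es"
  shows "\<exists>U \<in> carrier_mat p p. (\<forall>k<p. \<forall>l<p. (\<Sum>i<p. U $$ (i,k) * U $$ (i,l)) = of_bool (k = l))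
     \<and> (\<forall>i<p. \<forall>j<p. (\<Sum>k<p. U $$ (i,k) * U $$ (j,k)) = of_bool (i = j))
     \<and> (\<forall>i<p. \<forall>j<p. A $$ (i,j) = (\<Sum>k<p. es ! k * U $$ (i,k) * U $$ (j,k)))
     \<and> length es = p \<and> A = U * diagm es * transpose_mat U \<and> (\<forall>k<p. 0 < es ! k)"
proof -
  have A: "A \<in> carrier_mat p p" and sym: "transpose_mat A = A" using spd unfolding spd_def by auto
  have cp: "char_poly A = (\<Prod>e\<leftarrow>es. [:-e,1:])" using se unfolding sorted_eigs_def by auto
  from spectral_idx[OF A sym cp] obtain U where U: "U \<in> carrier_mat p p"
    and o1: "\<forall>k<p. \<forall>l<p. (\<Sum>i<p. U $$ (i,k) * U $$ (i,l)) = of_bool (k = l)"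
    and o2: "\<forall>i<p. \<forall>j<p. (\<Sum>k<p. U $$ (i,k) * U $$ (j,k)) = of_bool (i = j)"
    and o3: "\<forall>i<p. \<forall>j<p. A $$ (i,j) = (\<Sum>k<p. es ! k * U $$ (i,k) * U $$ (j,k))"
    and len: "length es = p" and rep: "A = U * diagm es * transpose_mat U" by blast
  have pos: "0 < es ! k" if k: "k < p" for k
  proof -
    define v where "v = vec p (\<lambda>i. U $$ (i,k))"
    have v: "v \<in> carrier_vec p" by (simp add: v_def)
    have "v \<bullet> v = 1" using o1 k by (simp add: v_def sprod_self_sum)
    hence "v \<noteq> 0\<^sub>v p" by auto
    hence gt: "v \<bullet> (A *\<^sub>v v) > 0" using spd v unfolding spd_def by auto
    have "v \<bullet> (A *\<^sub>v v) = (\<Sum>i<p. \<Sum>j<p. (\<Sum>m<p. es ! m * U $$ (i,m) * U $$ (j,m)) * (\<Sum>l<p. of_bool (k = l) * U $$ (j,l) * U $$ (i,l)))"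
    proof -
      have "v \<bullet> (A *\<^sub>v v) = (\<Sum>i<p. U $$ (i,k) * (\<Sum>j<p. A $$ (i,j) * U $$ (j,k)))"
        using A by (simp add: v_def scalar_prod_def lessThan_atLeast0)
      also have "\<dots> = (\<Sum>i<p. \<Sum>j<p. A $$ (i,j) * (U $$ (j,k) * U $$ (i,k)))"
        by (simp add: sum_distrib_left algebra_simps)
      also have "\<dots> = (\<Sum>i<p. \<Sum>j<p. (\<Sum>m<p. es ! m * U $$ (i,m) * U $$ (j,m)) * (\<Sum>l<p. of_bool (k = l) * U $$ (j,l) * U $$ (i,l)))"
      proof (intro sum.cong refl)
        fix i j assume "i \<in> {..<p}" "j \<in> {..<p}"
        moreover have "(\<Sum>l<p. of_bool (k = l) * U $$ (j,l) * U $$ (i,l)) = U $$ (j,k) * U $$ (i,k)"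
          using sum_delta_l[OF k, of "\<lambda>l. U $$ (j,l) * U $$ (i,l)"] by (simp add: mult.assoc)
        ultimately show "A $$ (i,j) * (U $$ (j,k) * U $$ (i,k)) = (\<Sum>m<p. es ! m * U $$ (i,m) * U $$ (j,m)) * (\<Sum>l<p. of_bool (k = l) * U $$ (j,l) * U $$ (i,l))"
          using o3 by simp
      qed
      finally show ?thesis .
    qed
    also have "\<dots> = (\<Sum>m<p. es ! m * of_bool (k = m))"
      by (rule quad_sum_orth[of p "\<lambda>i k. U $$ (i,k)"]) (use o1 in auto)
    also have "\<dots> = (\<Sum>m<p. of_bool (k = m) * es ! m)" by (simp only: mult.commute)
    also have "\<dots> = es ! k" using sum_delta_l[OF k] .
    finally show ?thesis using gt by simp
  qed
  show ?thesis using U o1 o2 o3 len rep pos by blast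
qed


lemma frob_L2: assumes "A \<in> carrier_mat p p"
  shows "frob_norm A = L2_set (\<lambda>x. A $$ x) ({..<p} \<times> {..<p})"
  using assms unfolding frob_norm_def L2_set_def by (simp add: sum.cartesian_product)

lemma frob_tri: assumes A: "A \<in> carrier_mat p p" and B: "B \<in> carrier_mat p p"
  shows "frob_norm (A - B) \<le> frob_norm A + frob_norm B"
proof -
  have "frob_norm (A - B) = L2_set (\<lambda>x. A $$ x + (- B $$ x)) ({..<p} \<times> {..<p})"
    unfolding frob_L2[OF minus_carrier_mat[OF B]] using A B
    by (intro L2_set_cong) auto
  also have "\<dots> \<le> L2_set (\<lambda>x. A $$ x) ({..<p} \<times> {..<p}) + L2_set (\<lambda>x. - B $$ x) ({..<p} \<times> {..<p})"
    by (rule L2_set_triangle_ineq)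
  also have "L2_set (\<lambda>x. - B $$ x) ({..<p} \<times> {..<p}) = L2_set (\<lambda>x. B $$ x) ({..<p} \<times> {..<p})"
    unfolding L2_set_def by simp
  finally show ?thesis unfolding frob_L2[OF A] frob_L2[OF B] .
qed

lemma trace_eig:
  fixes U :: "real mat"
  assumes A: "A \<in> carrier_mat p p"
    and o1: "\<forall>k<p. \<forall>l<p. (\<Sum>i<p. U $$ (i,k) * U $$ (i,l)) = of_bool (k = l)"
    and o3: "\<forall>i<p. \<forall>j<p. A $$ (i,j) = (\<Sum>k<p. es ! k * U $$ (i,k) * U $$ (j,k))"
  shows "mtrace A = (\<Sum>k<p. es ! k)"
proof -
  have "mtrace A = (\<Sum>i<p. \<Sum>k<p. es ! k * (U $$ (i,k) * U $$ (i,k)))"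
    unfolding mtrace_def using A o3 by (simp add: mult.assoc)
  also have "\<dots> = (\<Sum>k<p. es ! k * (\<Sum>i<p. U $$ (i,k) * U $$ (i,k)))"
    by (subst sum.swap) (simp add: sum_distrib_left)
  also have "\<dots> = (\<Sum>k<p. es ! k)" using o1 by simp
  finally show ?thesis .
qed

lemma trace_prod:
  fixes U V :: "real mat"
  assumes A: "A \<in> carrier_mat p p" and B: "B \<in> carrier_mat p p"
    and oA: "\<forall>i<p. \<forall>j<p. A $$ (i,j) = (\<Sum>k<p. a ! k * U $$ (i,k) * U $$ (j,k))"
    and oB: "\<forall>i<p. \<forall>j<p. B $$ (i,j) = (\<Sum>k<p. b ! k * V $$ (i,k) * V $$ (j,k))"
  shows "mtrace (A * B) = (\<Sum>k<p. \<Sum>l<p. a ! k * b ! l * (\<Sum>i<p. U $$ (i,k) * V $$ (i,l))\<^sup>2)"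
proof -
  have "mtrace (A * B) = (\<Sum>i<p. \<Sum>j<p. (\<Sum>k<p. a ! k * U $$ (i,k) * U $$ (j,k)) * (\<Sum>l<p. b ! l * V $$ (j,l) * V $$ (i,l)))"
  proof -
    have "mtrace (A * B) = (\<Sum>i<p. (A * B) $$ (i,i))" unfolding mtrace_def using A by simp
    also have "\<dots> = (\<Sum>i<p. \<Sum>j<p. A $$ (i,j) * B $$ (j,i))"
      by (intro sum.cong refl) (rule mat_entry_sum[OF A B], auto)
    also have "\<dots> = (\<Sum>i<p. \<Sum>j<p. (\<Sum>k<p. a ! k * U $$ (i,k) * U $$ (j,k)) * (\<Sum>l<p. b ! l * V $$ (j,l) * V $$ (i,l)))"
      by (intro sum.cong refl) (use oA oB in auto)
    finally show ?thesis .
  qed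
  also have "\<dots> = (\<Sum>k<p. \<Sum>l<p. a ! k * b ! l * (\<Sum>i<p. U $$ (i,k) * V $$ (i,l))\<^sup>2)"
    by (rule quad_sum[of "\<lambda>k. a ! k" "\<lambda>i k. U $$ (i,k)" p "\<lambda>l. b ! l" "\<lambda>i k. V $$ (i,k)"])
  finally show ?thesis .
qed

lemma stoch:
  fixes U V :: "nat \<Rightarrow> nat \<Rightarrow> real"
  assumes o1: "\<And>k l. k < n \<Longrightarrow> l < n \<Longrightarrow> (\<Sum>i<n. U i k * U i l) = of_bool (k = l)"
    and o2: "\<And>i j. i < n \<Longrightarrow> j < n \<Longrightarrow> (\<Sum>l<n. V i l * V j l) = of_bool (i = j)"
    and k: "k < n"
  shows "(\<Sum>l<n. (\<Sum>i<n. U i k * V i l)\<^sup>2) = 1"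
proof -
  have "(\<Sum>l<n. (\<Sum>i<n. U i k * V i l)\<^sup>2) = (\<Sum>l<n. \<Sum>i<n. \<Sum>j<n. (U i k * U j k) * (V i l * V j l))"
    by (simp add: power2_eq_square sum_product algebra_simps)
  also have "\<dots> = (\<Sum>i<n. \<Sum>j<n. \<Sum>l<n. (U i k * U j k) * (V i l * V j l))"
  proof -
    have "(\<Sum>l<n. \<Sum>i<n. \<Sum>j<n. (U i k * U j k) * (V i l * V j l)) = (\<Sum>i<n. \<Sum>l<n. \<Sum>j<n. (U i k * U j k) * (V i l * V j l))"
      by (rule sum.swap)
    also have "\<dots> = (\<Sum>i<n. \<Sum>j<n. \<Sum>l<n. (U i k * U j k) * (V i l * V j l))"
      by (rule sum.cong[OF refl], rule sum.swap)
    finally show ?thesis .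
  qed
  also have "\<dots> = (\<Sum>i<n. \<Sum>j<n. (U i k * U j k) * of_bool (j = i))"
  proof (intro sum.cong refl)
    fix i j assume i: "i \<in> {..<n}" and j: "j \<in> {..<n}"
    have o: "(\<Sum>l<n. V i l * V j l) = of_bool (j = i)" using o2[of i j] i j by (cases "i = j") auto
    show "(\<Sum>l<n. (U i k * U j k) * (V i l * V j l)) = (U i k * U j k) * of_bool (j = i)"
      by (simp only: sum_distrib_left[symmetric] o)
  qed
  also have "\<dots> = (\<Sum>i<n. U i k * U i k)"
  proof (rule sum.cong[OF refl])
    fix i assume "i \<in> {..<n}"
    thus "(\<Sum>j<n. (U i k * U j k) * of_bool (j = i)) = U i k * U i k"
      using sum_delta_r[of i n "\<lambda>j. U i k * U j k"] by simp
  qed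
  also have "\<dots> = 1" using o1[OF k k] by simp
  finally show ?thesis .
qed

lemma diag_mat_diagm: "diag_mat (diagm es) = es"
  by (rule nth_equalityI) (auto simp: diag_mat_def diagm_def)

lemma det_spec:
  fixes U :: "real mat"
  assumes U: "U \<in> carrier_mat p p" and len: "length es = p"
    and o1: "\<forall>k<p. \<forall>l<p. (\<Sum>i<p. U $$ (i,k) * U $$ (i,l)) = of_bool (k = l)"
    and rep: "A = U * diagm es * transpose_mat U"
  shows "det A = (\<Prod>k<p. es ! k)"
proof -
  have D: "diagm es \<in> carrier_mat p p" using diagm_carrier[of es] unfolding len .
  have Ut: "transpose_mat U \<in> carrier_mat p p" using U by simp
  have UU: "transpose_mat U * U = 1\<^sub>m p"
  proof (rule eq_matI)
    fix k l assume "k < dim_row (1\<^sub>m p)" "l < dim_col (1\<^sub>m p)"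
    hence kl: "k < p" "l < p" by auto
    have "(transpose_mat U * U) $$ (k,l) = (\<Sum>i<p. U $$ (i,k) * U $$ (i,l))"
      using mat_entry_sum[OF Ut U kl] kl U by simp
    thus "(transpose_mat U * U) $$ (k,l) = 1\<^sub>m p $$ (k,l)" using o1 kl by simp
  qed (use U in auto)
  have "det (transpose_mat U) * det U = 1" using det_mult[OF Ut U] UU by simp
  hence dU: "det U * det U = 1" using det_transpose[OF U] by simp
  have ut: "upper_triangular (diagm es)" unfolding upper_triangular_def diagm_def by auto
  have dD: "det (diagm es) = (\<Prod>k<p. es ! k)"
    using det_upper_triangular[OF ut D] by (simp add: diag_mat_diagm prod.list_conv_set_nth len lessThan_atLeast0)
  have "det A = det U * det (diagm es) * det (transpose_mat U)"
    unfolding rep using det_mult[OF mult_carrier_mat[OF U D] Ut] det_mult[OF U D] by simp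
  also have "\<dots> = det (diagm es) * (det U * det U)" using det_transpose[OF U] by simp
  finally show ?thesis using dU dD by simp
qed


lemma inv_spec:
  fixes V Th :: "real mat"
  assumes Th: "Th \<in> carrier_mat p p"
    and o1: "\<forall>k<p. \<forall>l<p. (\<Sum>i<p. V $$ (i,k) * V $$ (i,l)) = of_bool (k = l)"
    and o2: "\<forall>i<p. \<forall>j<p. (\<Sum>k<p. V $$ (i,k) * V $$ (j,k)) = of_bool (i = j)"
    and o3: "\<forall>i<p. \<forall>j<p. Th $$ (i,j) = (\<Sum>k<p. la ! k * V $$ (i,k) * V $$ (j,k))"
    and pos: "\<forall>k<p. 0 < la ! k"
  shows "frob_norm (minv Th) = sqrt (\<Sum>k<p. 1 / (la ! k)\<^sup>2) \<and> minv Th \<in> carrier_mat p p"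
proof -
  define B where "B = mat p p (\<lambda>(i,j). \<Sum>k<p. (1 / la ! k) * V $$ (i,k) * V $$ (j,k))"
  have B: "B \<in> carrier_mat p p" by (simp add: B_def)
  have TB: "Th * B = 1\<^sub>m p"
  proof (rule eq_matI)
    fix i j assume "i < dim_row (1\<^sub>m p)" "j < dim_col (1\<^sub>m p)"
    hence ij: "i < p" "j < p" by auto
    have "(Th * B) $$ (i,j) = (\<Sum>l<p. Th $$ (i,l) * B $$ (l,j))" using mat_entry_sum[OF Th B ij] .
    also have "\<dots> = (\<Sum>l<p. (\<Sum>k<p. la ! k * V $$ (i,k) * V $$ (l,k)) * (\<Sum>m<p. (1 / la ! m) * V $$ (l,m) * V $$ (j,m)))"
      by (intro sum.cong refl) (use ij o3 in \<open>auto simp: B_def\<close>)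
    also have "\<dots> = (\<Sum>k<p. la ! k * (1 / la ! k) * V $$ (i,k) * V $$ (j,k))"
      by (rule prod_form[of p "\<lambda>i k. V $$ (i,k)" "\<lambda>k. la ! k" i "\<lambda>m. 1 / la ! m" j]) (use o1 in auto)
    also have "\<dots> = (\<Sum>k<p. V $$ (i,k) * V $$ (j,k))"
      by (intro sum.cong refl) (use pos in auto)
    also have "\<dots> = 1\<^sub>m p $$ (i,j)" using o2 ij by simp
    finally show "(Th * B) $$ (i,j) = 1\<^sub>m p $$ (i,j)" .
  qed (use Th B in auto)
  have BT: "B * Th = 1\<^sub>m p" using mat_mult_left_right_inverse[OF Th B TB] .
  have "minv Th = B"
  proof (cases "mat_inverse Th")
    case None
    from mat_inverse(1)[OF Th None, of "()"] have "Th \<notin> Units (ring_mat TYPE(real) p ())" .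
    moreover have "Th \<in> Units (ring_mat TYPE(real) p ())"
      unfolding Units_def ring_mat_def using Th B TB BT by auto
    ultimately show ?thesis by simp
  next
    case (Some B')
    from mat_inverse(2)[OF Th Some] have TB': "Th * B' = 1\<^sub>m p" and B': "B' \<in> carrier_mat p p" by auto
    have "B' = (B * Th) * B'" using BT B' by simp
    also have "\<dots> = B * (Th * B')" using B Th B' by simp
    also have "\<dots> = B" using TB' B by simp
    finally show ?thesis unfolding minv_def Some by simp
  qed
  moreover have "(\<Sum>i<p. \<Sum>j<p. (B $$ (i,j))\<^sup>2) = (\<Sum>k<p. 1 / (la ! k)\<^sup>2)"
  proof -
    have "(\<Sum>i<p. \<Sum>j<p. (B $$ (i,j))\<^sup>2) = (\<Sum>i<p. \<Sum>j<p. (\<Sum>k<p. (1 / la ! k) * V $$ (i,k) * V $$ (j,k)) * (\<Sum>l<p. (1 / la ! l) * V $$ (j,l) * V $$ (i,l)))"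
      by (intro sum.cong refl) (auto simp: B_def power2_eq_square mult.commute)
    also have "\<dots> = (\<Sum>k<p. (1 / la ! k) * (1 / la ! k))"
      by (rule quad_sum_orth[of p "\<lambda>i k. V $$ (i,k)"]) (use o1 in auto)
    also have "\<dots> = (\<Sum>k<p. 1 / (la ! k)\<^sup>2)" by (simp add: power2_eq_square)
    finally show ?thesis .
  qed
  ultimately show ?thesis unfolding frob_norm_def using B by simp
qed

lemma powr_m2: "0 < (a::real) \<Longrightarrow> a powr (-2) = 1 / a\<^sup>2"
  by (simp add: powr_minus powr_numeral divide_inverse)



theorem mainTheorem17:
  fixes p :: nat and S :: "real mat" and om :: "real list"
  assumes S_spd: "spd p S"
    and S_ne_I: "S \<noteq> 1\<^sub>m p"
    and om: "sorted_eigs S om"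
  shows "(\<forall>i<p. rval om i > ln (om ! (p - 1 - i)) + 1)
    \<and> (\<forall>i<p. \<exists>a b. 0 < a \<and> a < b \<and> root_set om i = {a, b})
    \<and> fobj S (1\<^sub>m p) = mtrace S
    \<and> (\<forall>Th la. spd p Th \<and> sorted_eigs Th la \<and>
          (\<exists>i<p. la ! i \<notin> {lam_min om i .. lam_max om i})
          \<longrightarrow> fobj S Th > fobj S (1\<^sub>m p))
    \<and> (\<forall>C Th la. C \<subseteq> {A. spd p A} \<and> 1\<^sub>m p \<in> C \<and> Th \<in> C \<and>
          (\<forall>A\<in>C. fobj S Th \<le> fobj S A) \<and> sorted_eigs Th la
          \<longrightarrow> (\<forall>i<p. la ! i \<in> {lam_min om i .. lam_max om i})
            \<and> frob_norm (S - minv Th)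
                \<le> sqrt (\<Sum>i<p. (lam_min om i) powr (-2)) + frob_norm S)"
proof -
  have S: "S \<in> carrier_mat p p" using S_spd unfolding spd_def by auto
  from spd_decomp[OF S_spd om] obtain U where U: "U \<in> carrier_mat p p"
    and o1: "\<forall>k<p. \<forall>l<p. (\<Sum>i<p. U $$ (i,k) * U $$ (i,l)) = of_bool (k = l)"
    and o2: "\<forall>i<p. \<forall>j<p. (\<Sum>k<p. U $$ (i,k) * U $$ (j,k)) = of_bool (i = j)"
    and o3: "\<forall>i<p. \<forall>j<p. S $$ (i,j) = (\<Sum>k<p. om ! k * U $$ (i,k) * U $$ (j,k))"
    and len: "length om = p" and pos: "\<forall>k<p. 0 < om ! k" by blast
  have omdec: "om ! j \<le> om ! i" if "i \<le> j" "j < p" for i j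
    using sorted_eigs_dec[OF om that(1)] that(2) len by simp
  have sumlist: "sum_list om = (\<Sum>k<p. om ! k)"
    by (simp add: sum_list_sum_nth len lessThan_atLeast0)
  have trS: "mtrace S = (\<Sum>k<p. om ! k)" by (rule trace_eig[OF S o1 o3])
  have ex1: "\<exists>k<p. om ! k \<noteq> 1"
  proof (rule ccontr)
    assume "\<not> ?thesis"
    hence all1: "\<forall>k<p. om ! k = 1" by auto
    have "S = 1\<^sub>m p"
    proof (rule eq_matI)
      fix i j assume "i < dim_row (1\<^sub>m p)" "j < dim_col (1\<^sub>m p)"
      hence ij: "i < p" "j < p" by auto
      have "S $$ (i,j) = (\<Sum>k<p. U $$ (i,k) * U $$ (j,k))" using o3 ij all1 by simp
      thus "S $$ (i,j) = 1\<^sub>m p $$ (i,j)" using o2 ij by simp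
    qed (use S in auto)
    with S_ne_I show False by simp
  qed
  have rdiff: "rval om i - (ln (om ! (p - 1 - i)) + 1) = (\<Sum>k<p. om ! k - (ln (om ! k) + 1))" if i: "i < p" for i
  proof -
    have h: "(\<Sum>j\<in>{0..<p}. ln (om ! (p - 1 - j)) + 1) = (ln (om ! (p - 1 - i)) + 1) + (\<Sum>j\<in>{0..<p} - {i}. ln (om ! (p - 1 - j)) + 1)"
      using i by (subst sum.remove[of "{0..<p}" i]) auto
    have r: "(\<Sum>j\<in>{0..<p}. ln (om ! (p - 1 - j)) + 1) = (\<Sum>k<p. ln (om ! k) + 1)"
      by (rule sum.reindex_bij_witness[of _ "\<lambda>k. p - 1 - k" "\<lambda>k. p - 1 - k"]) auto
    show ?thesis unfolding rval_def len using h r sumlist by (simp add: sum_subtractf)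
  qed
  have P1: "rval om i > ln (om ! (p - 1 - i)) + 1" if i: "i < p" for i
  proof -
    obtain k where k: "k < p" "om ! k \<noteq> 1" using ex1 by auto
    have "0 < (\<Sum>k<p. om ! k - (ln (om ! k) + 1))"
    proof (rule sum_pos2[of _ k])
      show "0 < om ! k - (ln (om ! k) + 1)" using ln_less_minus_one[of "om ! k"] pos k by simp
      show "0 \<le> om ! j - (ln (om ! j) + 1)" if "j \<in> {..<p}" for j
        using ln_le_minus_one[of "om ! j"] pos that by simp
    qed (use k in auto)
    thus ?thesis using rdiff[OF i] by simp
  qed
  have roots: "\<exists>a b. 0 < a \<and> a < b \<and> root_set om i = {a, b} \<and>
     (\<forall>x. 0 < x \<and> (x < a \<or> b < x) \<longrightarrow> rval om i < - ln x + x * om ! (p - 1 - i))" if i: "i < p" for i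
  proof -
    have w: "0 < om ! (p - 1 - i)" using pos i by simp
    from g_roots[OF w P1[OF i]] show ?thesis unfolding root_set_def len by simp
  qed
  have P3: "fobj S (1\<^sub>m p) = mtrace S" unfolding fobj_def using S by simp
  have P4: "mtrace S < fobj S Th"
    if Th_spd: "spd p Th" and la: "sorted_eigs Th la" and i: "i < p"
      and notin: "la ! i \<notin> {lam_min om i .. lam_max om i}" for Th la i
  proof -
    have Th: "Th \<in> carrier_mat p p" using Th_spd unfolding spd_def by auto
    from spd_decomp[OF Th_spd la] obtain V where V: "V \<in> carrier_mat p p"
      and v1: "\<forall>k<p. \<forall>l<p. (\<Sum>i<p. V $$ (i,k) * V $$ (i,l)) = of_bool (k = l)"
      and v2: "\<forall>i<p. \<forall>j<p. (\<Sum>k<p. V $$ (i,k) * V $$ (j,k)) = of_bool (i = j)"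
      and v3: "\<forall>i<p. \<forall>j<p. Th $$ (i,j) = (\<Sum>k<p. la ! k * V $$ (i,k) * V $$ (j,k))"
      and lenl: "length la = p" and repl: "Th = V * diagm la * transpose_mat V"
      and posl: "\<forall>k<p. 0 < la ! k" by blast
    from roots[OF i] obtain a b where ab: "0 < a" "a < b" "root_set om i = {a, b}"
      and out: "\<forall>x. 0 < x \<and> (x < a \<or> b < x) \<longrightarrow> rval om i < - ln x + x * om ! (p - 1 - i)" by blast
    have "lam_min om i = a" "lam_max om i = b" unfolding lam_min_def lam_max_def ab(3) using ab by auto
    hence "la ! i < a \<or> b < la ! i" using notin by auto
    hence Gi: "rval om i < - ln (la ! i) + la ! i * om ! (p - 1 - i)" using out posl i by blast
    have Gl: "ln (om ! (p - 1 - l)) + 1 \<le> - ln (la ! l) + la ! l * om ! (p - 1 - l)" if "l < p" for l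
      using g_lower[of "om ! (p - 1 - l)" "la ! l"] pos posl that by simp
    have detT: "det Th = (\<Prod>k<p. la ! k)" by (rule det_spec[OF V lenl v1 repl])
    have lndet: "ln (det Th) = (\<Sum>k<p. ln (la ! k))" unfolding detT
      by (rule ln_prod) (use posl in auto)
    define P where "P k l = (\<Sum>i<p. U $$ (i,k) * V $$ (i,l))\<^sup>2" for k l
    have trST: "mtrace (S * Th) = (\<Sum>k<p. \<Sum>l<p. om ! k * la ! l * P k l)"
      unfolding P_def by (rule trace_prod[OF S Th o3 v3])
    have ds: "(\<Sum>k<p. \<Sum>l<p. om ! k * la ! l * P k l) \<ge> (\<Sum>l<p. la ! l * om ! (p - 1 - l))"
    proof (rule ds_ineq[of p "\<lambda>k. om ! k" "\<lambda>l. la ! l" P])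
      show "om ! j \<le> om ! i" if "i \<le> j" "j < p" for i j using omdec that .
      show "la ! j \<le> la ! i" if "i \<le> j" "j < p" for i j using sorted_eigs_dec[OF la that(1)] that(2) lenl by simp
      show "0 \<le> la ! i" if "i < p" for i using posl that by auto
      show "0 \<le> P k l" for k l unfolding P_def by simp
      show "(\<Sum>l<p. P k l) = 1" if "k < p" for k
        unfolding P_def by (rule stoch[of p "\<lambda>i k. U $$ (i,k)" "\<lambda>i k. V $$ (i,k)"]) (use o1 v2 that in auto)
      show "(\<Sum>k<p. P k l) = 1" if "l < p" for l
      proof -
        have "(\<Sum>k<p. (\<Sum>i<p. V $$ (i,l) * U $$ (i,k))\<^sup>2) = 1"
          by (rule stoch[of p "\<lambda>i k. V $$ (i,k)" "\<lambda>i k. U $$ (i,k)"]) (use v1 o2 that in auto)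
        thus ?thesis unfolding P_def by (simp add: mult.commute)
      qed
    qed
    have "fobj S Th = - (\<Sum>k<p. ln (la ! k)) + mtrace (S * Th)" unfolding fobj_def lndet ..
    also have "\<dots> \<ge> - (\<Sum>k<p. ln (la ! k)) + (\<Sum>l<p. la ! l * om ! (p - 1 - l))"
      using ds trST by simp
    finally have f1: "fobj S Th \<ge> (\<Sum>l\<in>{0..<p}. - ln (la ! l) + la ! l * om ! (p - 1 - l))"
      by (simp add: sum.distrib sum_negf sum_subtractf lessThan_atLeast0 mult.commute)
    have f2: "(\<Sum>l\<in>{0..<p}. - ln (la ! l) + la ! l * om ! (p - 1 - l))
      = (- ln (la ! i) + la ! i * om ! (p - 1 - i)) + (\<Sum>l\<in>{0..<p} - {i}. - ln (la ! l) + la ! l * om ! (p - 1 - l))"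
      using i by (subst sum.remove[of "{0..<p}" i]) auto
    have f3: "(\<Sum>l\<in>{0..<p} - {i}. - ln (la ! l) + la ! l * om ! (p - 1 - l)) \<ge> (\<Sum>l\<in>{0..<p} - {i}. ln (om ! (p - 1 - l)) + 1)"
      by (rule sum_mono) (use Gl in auto)
    have f4: "rval om i + (\<Sum>l\<in>{0..<p} - {i}. ln (om ! (p - 1 - l)) + 1) = mtrace S"
      unfolding rval_def len trS sumlist by simp
    show ?thesis using f1 f2 f3 f4 Gi by linarith
  qed
  have P5: "(\<forall>i<p. la ! i \<in> {lam_min om i .. lam_max om i})
            \<and> frob_norm (S - minv Th) \<le> sqrt (\<Sum>i<p. (lam_min om i) powr (-2)) + frob_norm S"
    if C: "C \<subseteq> {A. spd p A}" "1\<^sub>m p \<in> C" "Th \<in> C" and mini: "\<forall>A\<in>C. fobj S Th \<le> fobj S A"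
      and la: "sorted_eigs Th la" for C Th la
  proof -
    have Th_spd: "spd p Th" using C by auto
    have Th: "Th \<in> carrier_mat p p" using Th_spd unfolding spd_def by auto
    have inI: "\<forall>i<p. la ! i \<in> {lam_min om i .. lam_max om i}"
    proof (intro allI impI)
      fix i assume i: "i < p"
      show "la ! i \<in> {lam_min om i .. lam_max om i}"
      proof (rule ccontr)
        assume "la ! i \<notin> {lam_min om i .. lam_max om i}"
        from P4[OF Th_spd la i this] have "mtrace S < fobj S Th" .
        moreover have "fobj S Th \<le> fobj S (1\<^sub>m p)" using mini C by auto
        ultimately show False using P3 by simp
      qed
    qed
    from spd_decomp[OF Th_spd la] obtain V where V: "V \<in> carrier_mat p p"
      and v1: "\<forall>k<p. \<forall>l<p. (\<Sum>i<p. V $$ (i,k) * V $$ (i,l)) = of_bool (k = l)"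
      and v2: "\<forall>i<p. \<forall>j<p. (\<Sum>k<p. V $$ (i,k) * V $$ (j,k)) = of_bool (i = j)"
      and v3: "\<forall>i<p. \<forall>j<p. Th $$ (i,j) = (\<Sum>k<p. la ! k * V $$ (i,k) * V $$ (j,k))"
      and posl: "\<forall>k<p. 0 < la ! k" by blast
    from inv_spec[OF Th v1 v2 v3 posl] have fi: "frob_norm (minv Th) = sqrt (\<Sum>k<p. 1 / (la ! k)\<^sup>2)"
      and Mc: "minv Th \<in> carrier_mat p p" by auto
    have lm: "0 < lam_min om k" if k: "k < p" for k
    proof -
      from roots[OF k] obtain a b where ab: "0 < a" "a < b" "root_set om k = {a, b}" by blast
      have "lam_min om k = a" unfolding lam_min_def ab(3) using ab by auto
      thus ?thesis using ab by simp
    qed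
    have "(\<Sum>k<p. 1 / (la ! k)\<^sup>2) \<le> (\<Sum>k<p. (lam_min om k) powr (-2))"
    proof (rule sum_mono)
      fix k assume "k \<in> {..<p}"
      hence k: "k < p" by simp
      have l0: "0 < lam_min om k" using lm[OF k] .
      have le: "lam_min om k \<le> la ! k" using inI k by auto
      have "(lam_min om k)\<^sup>2 \<le> (la ! k)\<^sup>2" using l0 le by (intro power_mono) auto
      moreover have "0 < (la ! k)\<^sup>2 * (lam_min om k)\<^sup>2" using l0 le by simp
      ultimately have "1 / (la ! k)\<^sup>2 \<le> 1 / (lam_min om k)\<^sup>2" by (intro divide_left_mono) auto
      thus "1 / (la ! k)\<^sup>2 \<le> (lam_min om k) powr (-2)" using powr_m2[OF l0] by simp
    qed
    hence "frob_norm (minv Th) \<le> sqrt (\<Sum>k<p. (lam_min om k) powr (-2))" unfolding fi by simp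
    moreover have "frob_norm (S - minv Th) \<le> frob_norm S + frob_norm (minv Th)" by (rule frob_tri[OF S Mc])
    ultimately show ?thesis using inI by simp
  qed
  have h1: "\<forall>i<p. rval om i > ln (om ! (p - 1 - i)) + 1" using P1 by blast
  have h2: "\<forall>i<p. \<exists>a b. 0 < a \<and> a < b \<and> root_set om i = {a, b}" using roots by blast
  have h4: "\<forall>Th la. spd p Th \<and> sorted_eigs Th la \<and>
          (\<exists>i<p. la ! i \<notin> {lam_min om i .. lam_max om i})
          \<longrightarrow> fobj S Th > fobj S (1\<^sub>m p)" using P4 P3 by auto
  have h5: "\<forall>C Th la. C \<subseteq> {A. spd p A} \<and> 1\<^sub>m p \<in> C \<and> Th \<in> C \<and>
          (\<forall>A\<in>C. fobj S Th \<le> fobj S A) \<and> sorted_eigs Th la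
          \<longrightarrow> (\<forall>i<p. la ! i \<in> {lam_min om i .. lam_max om i})
            \<and> frob_norm (S - minv Th)
                \<le> sqrt (\<Sum>i<p. (lam_min om i) powr (-2)) + frob_norm S"
    using P5 by blast
  show ?thesis using h1 h2 P3 h4 h5 by blast
qed
end
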